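(* Consider the following discrete-consumption investment problem for a homogeneous collective of $n$ individuals, with $n=1$ or $n=\infty$. Market: a risk-free asset with constant interest rate $r$ and a risky asset $\mathrm{d}S_t=S_t(\mu\,\mathrm{d}t+\sigma\,\mathrm{d}W_t)$, with $\sigma>0$. Trading is continuous; consumption occurs at the times $\mathcal T=\{0,\delta t,2\delta t,\dots,T\}$. Mortality: $s_t\in(0,1]$ is the probability of surviving from $t\in\mathcal T$ to $t+\delta t$, independently of $W$. Wealth: $X_t$ is the per-survivor fund value before consumption and $c_t$ the per-survivor consumption at $t\in\mathcal T$. After consumption the per-survivor wealth is $\overline X_t=s_t^{-C}(X_t-c_t)$, where $C=0$ if $n=1$ and $C=1$ if $n=\infty$. On $[t,t+\delta t)$ the wealth evolves as $\mathrm{d}\overline X_u=\overline X_u(a_u\mu+(1-a_u)r)\,\mathrm{d}u+\overline X_ua_u\sigma\,\mathrm{d}W_u$, and $X_{t+\delta t}$ is the left limit at $t+\delta t$. The initial wealth is $X_0=x_0>0$. Preferences: homogeneous Epstein--Zin utility with mortality, with $\alpha,\rho\in(-\infty,1)\setminus\{0\}$ and $\beta=1$. It is defined by $Z_t=0$ (if $\rho>0$) or $Z_t=\infty$ (if $\rho<0$) after death, and otherwise $Z_t=[c_t^\rho+\beta\,\mathbb E_t(Z_{t+\delta t}^\alpha)^{\rho/\alpha}]^{1/\rho}$, with the convention $\infty^a=0$ for $a<0$. Let $z_t$ be the optimal Epstein--Zin utility at time $t$ for unit per-survivor wealth. Set $$a^*=\frac{\mu-r}{(1-\alpha)\sigma^2},\quad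 \xi=a^*(\mu-r)+r-\tfrac12(a^* )^2(1-\alpha)\sigma^2,\quad \tilde\xi=a^*(\mu-r)+r-\tfrac12(a^* )^2\sigma^2,\quad \phi_t=\beta^{1/\rho}e^{\xi\,\delta t}s_t^{\frac1\alpha-C}.$$ Under the optimal strategy (proportion $a^*$ in the risky asset at all times, and consumption of the proportion $z_t^{\rho/(\rho-1)}$ of wealth at each $t\in\mathcal T$), the following hold. 1. The per-survivor fund value $X_t$ is log-normally distributed, $\log X_t\sim N(\mu^X_t,(\sigma^X_t)^2)$, with $\sigma^X_t=\sigma a^*\sqrt t$ and $$\mu^X_{t+\delta t}=\mu^X_t+\log(s_t^{-C})+\log\big(1-z_t^{\frac{\rho}{\rho-1}}\big)+\tilde\xi\,\delta t,\qquad \mu^X_0=\log x_0.$$ 2. The optimal per-survivor consumption satisfies $$\log c_t\sim N\Big(\tfrac{\rho}{\rho-1}\log z_t+\mu^X_t,\ (\sigma^X_t)^2\Big).$$ 3. The conditional mean of log consumption satisfies $$\mathbb E(\log c_{t+\delta t}\mid c_t)=\log c_t+\log(s_t^{-C})+\tfrac{\rho}{1-\rho}\log\phi_t+\tilde\xi\,\delta t.$$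
   Context: $\mathbb E_t$ denotes conditional expectation given the information at time $t$. The case $n=\infty$ denotes an infinitely large tontine-style collective, in which the wealth of the deceased is shared evenly among the survivors, so that survivors' wealth grows by the factor $s_t^{-1}$. *)

theory Defs
  imports "HOL-Probability.Probability"
begin

datatype collective = Single | Infinite

definition C_exp :: "collective \<Rightarrow> real" where
  "C_exp n = (case n of Single \<Rightarrow> 0 | Infinite \<Rightarrow> 1)"

definition brownian_motion :: "'a measure \<Rightarrow> (real \<Rightarrow> 'a \<Rightarrow> real) \<Rightarrow> bool" where
  "brownian_motion M W \<longleftrightarrow>
     prob_space M \<and>
     (\<forall>t\<ge>0. W t \<in> borel_measurable M) \<and>
     (AE \<omega> in M. W 0 \<omega> = 0) \<and>
     (AE \<omega> in M. continuous_on {0..} (\<lambda>t. W t \<omega>)) \<and>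
     (\<forall>s t. 0 \<le> s \<and> s < t \<longrightarrow>
        distributed M lborel (\<lambda>\<omega>. W t \<omega> - W s \<omega>) (normal_density 0 (sqrt (t - s)))) \<and>
     (\<forall>ts::real list. sorted_wrt (<) ts \<and> ts \<noteq> [] \<and> 0 \<le> hd ts \<longrightarrow>
        prob_space.indep_vars M (\<lambda>_. borel) (\<lambda>i \<omega>. W (ts ! Suc i) \<omega> - W (ts ! i) \<omega>)
          {..<length ts - 1})"

definition normal_law :: "'a measure \<Rightarrow> ('a \<Rightarrow> real) \<Rightarrow> real \<Rightarrow> real \<Rightarrow> bool" where
  "normal_law M Y m v \<longleftrightarrow>
     (v = 0 \<and> Y \<in> borel_measurable M \<and> (AE \<omega> in M. Y \<omega> = m)) \<or>
     (v > 0 \<and> distributed M lborel Y (normal_density m (sqrt v)))"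

text \<open>Optimal Epstein--Zin utility per unit per-survivor wealth, z at time j * dt, for
  horizon T = N * dt, obtained by backward recursion from z_T = 1:
  z_t^(rho/(1-rho)) = 1 + (phi_t z_(t+dt))^(rho/(1-rho)).
  The auxiliary function is indexed by the number m of remaining steps.\<close>
fun ez_z_aux :: "(nat \<Rightarrow> real) \<Rightarrow> real \<Rightarrow> nat \<Rightarrow> nat \<Rightarrow> real" where
  "ez_z_aux \<phi> \<rho> N 0 = 1"
| "ez_z_aux \<phi> \<rho> N (Suc m) =
     (1 + (\<phi> (N - Suc m) * ez_z_aux \<phi> \<rho> N m) powr (\<rho> / (1 - \<rho>))) powr ((1 - \<rho>) / \<rho>)"

definition ez_z :: "(nat \<Rightarrow> real) \<Rightarrow> real \<Rightarrow> nat \<Rightarrow> nat \<Rightarrow> real" where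
  "ez_z \<phi> \<rho> N j = ez_z_aux \<phi> \<rho> N (N - j)"

end

theory Submission imports Defs begin

lemma bm_ps: "brownian_motion M W \<Longrightarrow> prob_space M"
  unfolding brownian_motion_def by blast

lemma bm_meas: "brownian_motion M W \<Longrightarrow> t \<ge> 0 \<Longrightarrow> W t \<in> borel_measurable M"
  unfolding brownian_motion_def by blast

lemma bm_incr: "brownian_motion M W \<Longrightarrow> 0 \<le> s \<Longrightarrow> s < t \<Longrightarrow>
   distributed M lborel (\<lambda>\<omega>. W t \<omega> - W s \<omega>) (normal_density 0 (sqrt (t - s)))"
  unfolding brownian_motion_def by blast

lemma bm_incr_int:
  assumes "brownian_motion M W" "0 \<le> s" "s < t"
  shows "integrable M (\<lambda>\<omega>. W t \<omega> - W s \<omega>)" "(\<integral>\<omega>. W t \<omega> - W s \<omega> \<partial>M) = 0"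
proof -
  interpret prob_space M using bm_ps[OF assms(1)] .
  have D: "distributed M lborel (\<lambda>\<omega>. W t \<omega> - W s \<omega>) (normal_density 0 (sqrt (t - s)))"
    using bm_incr[OF assms] .
  have sp: "sqrt (t - s) > 0" using assms by simp
  show "integrable M (\<lambda>\<omega>. W t \<omega> - W s \<omega>)"
  proof (rule distributed_integrable_var[OF D])
    show "integrable lborel (\<lambda>x. normal_density 0 (sqrt (t - s)) x * x)"
      using integrable_normal_moment_nz_1[OF sp, of 0] by simp
  qed simp
  show "(\<integral>\<omega>. W t \<omega> - W s \<omega> \<partial>M) = 0"
    using normal_distributed_expectation[OF sp D] by simp
qed

lemma affine_int:
  assumes "brownian_motion M W" "0 \<le> t"
  shows "integrable M (\<lambda>\<omega>. m + k * (W t \<omega> - W 0 \<omega>))"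
proof -
  interpret prob_space M using bm_ps[OF assms(1)] .
  show ?thesis
  proof (cases "t = 0")
    case True then show ?thesis by simp
  next
    case False
    then have "integrable M (\<lambda>\<omega>. W t \<omega> - W 0 \<omega>)" using bm_incr_int[OF assms(1), of 0 t] assms by auto
    then show ?thesis by auto
  qed
qed

lemma affine_normal_law:
  assumes "brownian_motion M W" "0 \<le> t"
  shows "normal_law M (\<lambda>\<omega>. m + k * (W t \<omega> - W 0 \<omega>)) m ((k * sqrt t)^2)"
proof -
  interpret prob_space M using bm_ps[OF assms(1)] .
  have meas: "(\<lambda>\<omega>. m + k * (W t \<omega> - W 0 \<omega>)) \<in> borel_measurable M"
    using bm_meas[OF assms(1)] assms(2) by measurable
  show ?thesis
  proof (cases "k = 0 \<or> t = 0")
    case True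
    then show ?thesis unfolding normal_law_def using meas by auto
  next
    case False
    then have kt: "k \<noteq> 0" "t > 0" using assms by auto
    have D: "distributed M lborel (\<lambda>\<omega>. W t \<omega> - W 0 \<omega>) (normal_density 0 (sqrt t))"
      using bm_incr[OF assms(1), of 0 t] kt by simp
    have "distributed M lborel (\<lambda>\<omega>. m + k * (W t \<omega> - W 0 \<omega>)) (normal_density (m + k * 0) (\<bar>k\<bar> * sqrt t))"
      by (rule normal_density_affine[OF D]) (use kt in auto)
    moreover have "sqrt ((k * sqrt t)^2) = \<bar>k\<bar> * sqrt t" using kt by (simp add: abs_mult)
    ultimately show ?thesis unfolding normal_law_def using kt by auto
  qed
qed

lemma indep_incr_integral:
  assumes BM: "brownian_motion M W" and t: "0 \<le> t1" "t1 < t2"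
    and g: "g \<in> borel_measurable borel" "\<And>x. \<bar>g x\<bar> \<le> B"
  shows "(\<integral>\<omega>. g (W t1 \<omega> - W 0 \<omega>) * (W t2 \<omega> - W t1 \<omega>) \<partial>M) = 0"
proof -
  interpret prob_space M using bm_ps[OF assms(1)] .
  have I1: "integrable M (\<lambda>\<omega>. W t2 \<omega> - W t1 \<omega>)" "(\<integral>\<omega>. W t2 \<omega> - W t1 \<omega> \<partial>M) = 0"
    using bm_incr_int[OF BM t] by auto
  show ?thesis
  proof (cases "t1 = 0")
    case True
    then show ?thesis using I1 by simp
  next
    case False
    then have t1p: "t1 > 0" using t by simp
    define ts where "ts = [0, t1, t2]"
    have "sorted_wrt (<) ts \<and> ts \<noteq> [] \<and> 0 \<le> hd ts" unfolding ts_def using t1p t by auto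
    then have ind: "indep_vars (\<lambda>_. borel) (\<lambda>i \<omega>. W (ts ! Suc i) \<omega> - W (ts ! i) \<omega>) {..<length ts - 1}"
      using BM unfolding brownian_motion_def by blast
    have l: "length ts - 1 = 2" unfolding ts_def by simp
    have ind2: "indep_vars (\<lambda>_. borel) (\<lambda>i \<omega>. (if i = 0 then g else id) (W (ts ! Suc i) \<omega> - W (ts ! i) \<omega>)) {..<2}"
      by (rule indep_vars_compose2[OF ind[unfolded l]]) (auto simp: g)
    have mg: "(\<lambda>\<omega>. g (W t1 \<omega> - W 0 \<omega>)) \<in> borel_measurable M"
    proof -
      have [measurable]: "W t1 \<in> borel_measurable M" "W 0 \<in> borel_measurable M"
        using bm_meas[OF BM] t1p by auto
      show ?thesis using g(1) by measurable
    qed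
    have intg: "integrable M (\<lambda>\<omega>. g (W t1 \<omega> - W 0 \<omega>))"
      by (rule integrable_const_bound[where B=B]) (use mg g(2) in auto)
    have "(\<integral>\<omega>. (\<Prod>i\<in>{..<2::nat}. (if i = 0 then g else id) (W (ts ! Suc i) \<omega> - W (ts ! i) \<omega>)) \<partial>M)
       = (\<Prod>i\<in>{..<2::nat}. \<integral>\<omega>. (if i = 0 then g else id) (W (ts ! Suc i) \<omega> - W (ts ! i) \<omega>) \<partial>M)"
      by (rule indep_vars_lebesgue_integral[OF _ ind2]) (use t bm_meas[OF BM, of 0] in \<open>auto simp: ts_def lessThan_Suc intg I1 less_2_cases_iff\<close>)
    also have "\<dots> = 0" by (simp add: numeral_2_eq_2 lessThan_Suc ts_def I1)
    finally show ?thesis by (simp add: numeral_2_eq_2 lessThan_Suc ts_def mult.commute)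
  qed
qed

theorem theorem3:
  fixes M :: "'a measure" and W :: "real \<Rightarrow> 'a \<Rightarrow> real"
    and n :: collective
    and r \<mu> \<sigma> \<alpha> \<rho> \<beta> dt x0 :: real and N :: nat
    and s :: "nat \<Rightarrow> real"
    and X c :: "nat \<Rightarrow> 'a \<Rightarrow> real"
    and muX :: "nat \<Rightarrow> real"
  defines "C \<equiv> C_exp n"
    and "a \<equiv> (\<mu> - r) / ((1 - \<alpha>) * \<sigma>^2)"
  defines "\<xi> \<equiv> a * (\<mu> - r) + r - 1/2 * a^2 * (1 - \<alpha>) * \<sigma>^2"
    and "\<xi>' \<equiv> a * (\<mu> - r) + r - 1/2 * a^2 * \<sigma>^2"
  defines "\<phi> \<equiv> (\<lambda>j. \<beta> powr (1 / \<rho>) * exp (\<xi> * dt) * s j powr (1 / \<alpha> - C))"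
  defines "z \<equiv> ez_z \<phi> \<rho> N"
  assumes BM: "brownian_motion M W"
    and sigma_pos: "\<sigma> > 0"
    and alpha: "\<alpha> < 1" "\<alpha> \<noteq> 0"
    and rho: "\<rho> < 1" "\<rho> \<noteq> 0"
    and beta: "\<beta> = 1"
    and dt_pos: "dt > 0"
    and surv: "\<And>j. 0 < s j \<and> s j \<le> 1"
    and x0_pos: "x0 > 0"
    and X0: "\<And>\<omega>. X 0 \<omega> = x0"
    and cons: "\<And>j \<omega>. c j \<omega> = z j powr (\<rho> / (\<rho> - 1)) * X j \<omega>"
    and wealth: "\<And>j \<omega>. j < N \<Longrightarrow> X (Suc j) \<omega> =
        s j powr (- C) * (X j \<omega> - c j \<omega>) *
        exp ((a * \<mu> + (1 - a) * r - 1/2 * a^2 * \<sigma>^2) * dt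
             + a * \<sigma> * (W (real (Suc j) * dt) \<omega> - W (real j * dt) \<omega>))"
    and muX0: "muX 0 = ln x0"
    and muX_step: "\<And>j. j < N \<Longrightarrow> muX (Suc j) =
        muX j + ln (s j powr (- C)) + ln (1 - z j powr (\<rho> / (\<rho> - 1))) + \<xi>' * dt"
  shows "(\<forall>j\<le>N. normal_law M (\<lambda>\<omega>. ln (X j \<omega>)) (muX j) ((\<sigma> * a * sqrt (real j * dt))^2))
       \<and> (\<forall>j\<le>N. normal_law M (\<lambda>\<omega>. ln (c j \<omega>))
              (\<rho> / (\<rho> - 1) * ln (z j) + muX j) ((\<sigma> * a * sqrt (real j * dt))^2))
       \<and> (\<forall>j<N. AE \<omega> in M.
              real_cond_exp M (vimage_algebra (space M) (c j) borel) (\<lambda>\<omega>. ln (c (Suc j) \<omega>)) \<omega>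
              = ln (c j \<omega>) + ln (s j powr (- C)) + \<rho> / (1 - \<rho>) * ln (\<phi> j) + \<xi>' * dt)"

proof -
  interpret prob_space M using bm_ps[OF BM] .
  define p where "p = \<rho> / (1 - \<rho>)"
  define q where "q = \<rho> / (\<rho> - 1)"
  define k where "k = a * \<sigma>"
  have p0: "p \<noteq> 0" using rho unfolding p_def by auto
  have qp: "q = - p" unfolding p_def q_def using rho by (auto simp: field_simps)
  have auxpos: "\<And>m. ez_z_aux \<phi> \<rho> N m > 0"
  proof -
    fix m show "ez_z_aux \<phi> \<rho> N m > 0"
    proof (induction m)
      case 0 then show ?case by simp
    next
      case (Suc m)
      have "1 + (\<phi> (N - Suc m) * ez_z_aux \<phi> \<rho> N m) powr (\<rho> / (1 - \<rho>)) > 0"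
        by (smt (verit) powr_ge_zero)
      then show ?case by simp
    qed
  qed
  have zpos: "\<And>j. z j > 0" unfolding z_def ez_z_def using auxpos by simp
  have sne: "\<And>j. s j \<noteq> 0" using surv by (metis less_irrefl)
  have phipos: "\<And>j. \<phi> j > 0" unfolding \<phi>_def beta using sne by simp
  have zrec: "\<And>j. j < N \<Longrightarrow> z j = (1 + (\<phi> j * z (Suc j)) powr p) powr (1 / p)"
  proof -
    fix j assume j: "j < N"
    have e: "N - j = Suc (N - Suc j)" using j by simp
    have e2: "N - Suc (N - Suc j) = j" using j by simp
    have "(1 - \<rho>) / \<rho> = 1 / p" unfolding p_def by simp
    then show "z j = (1 + (\<phi> j * z (Suc j)) powr p) powr (1 / p)"
      unfolding z_def ez_z_def e by (simp only: ez_z_aux.simps e2 p_def)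
  qed
  have key: "\<And>j. j < N \<Longrightarrow> z j powr q < 1 \<and>
      ln (1 - z j powr q) = p * ln (\<phi> j) + p * ln (z (Suc j)) - p * ln (z j)"
  proof -
    fix j assume j: "j < N"
    define u where "u = (\<phi> j * z (Suc j)) powr p"
    have upos: "u > 0" unfolding u_def using phipos[of j] zpos[of "Suc j"] by simp
    have zj: "z j = (1 + u) powr (1 / p)" using zrec[OF j] unfolding u_def .
    have zq: "z j powr q = 1 / (1 + u)"
      unfolding zj qp using upos p0 by (simp add: powr_powr powr_minus_divide)
    have lz: "p * ln (z j) = ln (1 + u)" unfolding zj using upos p0 by (simp add: ln_powr)
    have lu: "ln u = p * ln (\<phi> j) + p * ln (z (Suc j))"
      unfolding u_def using phipos[of j] zpos[of "Suc j"] by (simp add: ln_powr ln_mult distrib_left)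
    have "1 - z j powr q = u / (1 + u)" unfolding zq using upos by (simp add: field_simps)
    then have "ln (1 - z j powr q) = ln u - ln (1 + u)" using upos by (simp add: ln_div)
    then show "z j powr q < 1 \<and> ln (1 - z j powr q) = p * ln (\<phi> j) + p * ln (z (Suc j)) - p * ln (z j)"
      using zq upos lz lu by simp
  qed
  have drift: "a * \<mu> + (1 - a) * r - 1/2 * a^2 * \<sigma>^2 = \<xi>'"
    unfolding \<xi>'_def by (simp add: algebra_simps)
  have lnX: "\<And>j. j \<le> N \<Longrightarrow> \<forall>\<omega>. X j \<omega> > 0 \<and>
      ln (X j \<omega>) = muX j + k * (W (real j * dt) \<omega> - W 0 \<omega>)"
  proof -
    fix j show "j \<le> N \<Longrightarrow> \<forall>\<omega>. X j \<omega> > 0 \<and> ln (X j \<omega>) = muX j + k * (W (real j * dt) \<omega> - W 0 \<omega>)"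
    proof (induction j)
      case 0 then show ?case using X0 x0_pos muX0 by simp
    next
      case (Suc j)
      then have j: "j < N" by simp
      show ?case
      proof
        fix \<omega>
        have IH: "X j \<omega> > 0" "ln (X j \<omega>) = muX j + k * (W (real j * dt) \<omega> - W 0 \<omega>)"
          using Suc j by auto
        have kj: "z j powr q < 1" using key[OF j] by simp
        have d: "X j \<omega> - c j \<omega> = X j \<omega> * (1 - z j powr q)"
          using cons[of j \<omega>] unfolding q_def by (simp add: algebra_simps)
        have sp: "s j powr (- C) > 0" using surv[of j] by simp
        have X1: "X (Suc j) \<omega> = s j powr (- C) * (X j \<omega> * (1 - z j powr q)) *
          exp (\<xi>' * dt + k * (W (real (Suc j) * dt) \<omega> - W (real j * dt) \<omega>))"
          using wealth[OF j, of \<omega>] d drift unfolding k_def by simp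
        have pos: "X (Suc j) \<omega> > 0" unfolding X1 using sp IH kj by simp
        have "ln (X (Suc j) \<omega>) = ln (s j powr (- C)) + (ln (X j \<omega>) + ln (1 - z j powr q)) +
             (\<xi>' * dt + k * (W (real (Suc j) * dt) \<omega> - W (real j * dt) \<omega>))"
          unfolding X1 using sp IH kj by (simp add: ln_mult)
        also have "\<dots> = muX (Suc j) + k * (W (real (Suc j) * dt) \<omega> - W 0 \<omega>)"
          unfolding muX_step[OF j] IH(2) q_def by (simp add: algebra_simps)
        finally show "X (Suc j) \<omega> > 0 \<and> ln (X (Suc j) \<omega>) = muX (Suc j) + k * (W (real (Suc j) * dt) \<omega> - W 0 \<omega>)"
          using pos by simp
      qed
    qed
  qed
  define Lc where "Lc j = q * ln (z j) + muX j" for j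
  have lnc: "\<And>j \<omega>. j \<le> N \<Longrightarrow> c j \<omega> > 0 \<and> ln (c j \<omega>) = Lc j + k * (W (real j * dt) \<omega> - W 0 \<omega>)"
  proof -
    fix j \<omega> assume j: "j \<le> N"
    have "X j \<omega> > 0" "ln (X j \<omega>) = muX j + k * (W (real j * dt) \<omega> - W 0 \<omega>)" using lnX[OF j] by auto
    moreover have "z j powr q > 0" using zpos[of j] by simp
    ultimately show "c j \<omega> > 0 \<and> ln (c j \<omega>) = Lc j + k * (W (real j * dt) \<omega> - W 0 \<omega>)"
      unfolding cons q_def[symmetric] Lc_def using zpos[of j] by (simp add: ln_mult ln_powr)
  qed
  have vv: "\<And>j. (\<sigma> * a * sqrt (real j * dt))^2 = (k * sqrt (real j * dt))^2"
    unfolding k_def by (simp add: mult.commute)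
  have P1: "\<forall>j\<le>N. normal_law M (\<lambda>\<omega>. ln (X j \<omega>)) (muX j) ((\<sigma> * a * sqrt (real j * dt))^2)"
  proof (intro allI impI)
    fix j assume j: "j \<le> N"
    have "(\<lambda>\<omega>. ln (X j \<omega>)) = (\<lambda>\<omega>. muX j + k * (W (real j * dt) \<omega> - W 0 \<omega>))"
      using lnX[OF j] by auto
    then show "normal_law M (\<lambda>\<omega>. ln (X j \<omega>)) (muX j) ((\<sigma> * a * sqrt (real j * dt))^2)"
      unfolding vv using affine_normal_law[OF BM, of "real j * dt"] dt_pos by simp
  qed
  have P2: "\<forall>j\<le>N. normal_law M (\<lambda>\<omega>. ln (c j \<omega>))
              (\<rho> / (\<rho> - 1) * ln (z j) + muX j) ((\<sigma> * a * sqrt (real j * dt))^2)"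
  proof (intro allI impI)
    fix j assume j: "j \<le> N"
    have "(\<lambda>\<omega>. ln (c j \<omega>)) = (\<lambda>\<omega>. Lc j + k * (W (real j * dt) \<omega> - W 0 \<omega>))"
      using lnc[OF j] by auto
    then show "normal_law M (\<lambda>\<omega>. ln (c j \<omega>)) (\<rho> / (\<rho> - 1) * ln (z j) + muX j) ((\<sigma> * a * sqrt (real j * dt))^2)"
      unfolding vv q_def[symmetric] Lc_def[symmetric] using affine_normal_law[OF BM, of "real j * dt"] dt_pos by simp
  qed
  have P3: "\<forall>j<N. AE \<omega> in M.
              real_cond_exp M (vimage_algebra (space M) (c j) borel) (\<lambda>\<omega>. ln (c (Suc j) \<omega>)) \<omega>
              = ln (c j \<omega>) + ln (s j powr (- C)) + \<rho> / (1 - \<rho>) * ln (\<phi> j) + \<xi>' * dt"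
  proof (intro allI impI)
    fix j assume j: "j < N"
    define F where "F = vimage_algebra (space M) (c j) borel"
    define D where "D = ln (s j powr (- C)) + \<rho> / (1 - \<rho>) * ln (\<phi> j) + \<xi>' * dt"
    define hh where "hh y = exp (Lc j + k * y)" for y
    have cj: "c j = (\<lambda>\<omega>. hh (W (real j * dt) \<omega> - W 0 \<omega>))"
    proof
      fix \<omega> show "c j \<omega> = hh (W (real j * dt) \<omega> - W 0 \<omega>)"
        using lnc[of j \<omega>] j unfolding hh_def by (metis exp_ln less_imp_le)
    qed
    have [measurable]: "W (real j * dt) \<in> borel_measurable M" "W 0 \<in> borel_measurable M"
      using bm_meas[OF BM] dt_pos by auto
    have cmeas: "c j \<in> borel_measurable M" unfolding cj hh_def by measurable
    have sub: "subalgebra M F"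
      unfolding subalgebra_def F_def
      using cmeas by (auto simp: sets_vimage_algebra2 measurable_sets)
    interpret fs: finite_measure_subalgebra M F
      by unfold_locales (rule sub)
    have LcD: "Lc (Suc j) = Lc j + D - k * 0"
    proof -
      have D': "D = ln (s j powr (- C)) + p * ln (\<phi> j) + \<xi>' * dt" unfolding D_def p_def ..
      show ?thesis
        using key[OF j] muX_step[OF j] unfolding Lc_def D' qp q_def[symmetric]
        by (simp add: algebra_simps)
    qed
    have fg: "\<And>\<omega>. ln (c (Suc j) \<omega>) = (ln (c j \<omega>) + D) + k * (W (real (Suc j) * dt) \<omega> - W (real j * dt) \<omega>)"
    proof -
      fix \<omega>
      have a1: "ln (c j \<omega>) = Lc j + k * (W (real j * dt) \<omega> - W 0 \<omega>)" using lnc[of j \<omega>] j by simp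
      have a2: "ln (c (Suc j) \<omega>) = Lc (Suc j) + k * (W (real (Suc j) * dt) \<omega> - W 0 \<omega>)"
        using lnc[of "Suc j" \<omega>] j by simp
      show "ln (c (Suc j) \<omega>) = (ln (c j \<omega>) + D) + k * (W (real (Suc j) * dt) \<omega> - W (real j * dt) \<omega>)"
        unfolding a1 a2 LcD by (simp add: algebra_simps)
    qed
    have intf: "integrable M (\<lambda>\<omega>. ln (c (Suc j) \<omega>))"
    proof -
      have "(\<lambda>\<omega>. ln (c (Suc j) \<omega>)) = (\<lambda>\<omega>. Lc (Suc j) + k * (W (real (Suc j) * dt) \<omega> - W 0 \<omega>))"
        using lnc[of "Suc j"] j by auto
      then show ?thesis using affine_int[OF BM, of "real (Suc j) * dt"] dt_pos by simp
    qed
    have intg: "integrable M (\<lambda>\<omega>. ln (c j \<omega>) + D)"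
    proof -
      have "(\<lambda>\<omega>. ln (c j \<omega>) + D) = (\<lambda>\<omega>. (Lc j + D) + k * (W (real j * dt) \<omega> - W 0 \<omega>))"
        using lnc[of j] j by auto
      then show ?thesis using affine_int[OF BM, of "real j * dt"] dt_pos by simp
    qed
    have incr: "integrable M (\<lambda>\<omega>. W (real (Suc j) * dt) \<omega> - W (real j * dt) \<omega>)"
      using bm_incr_int(1)[OF BM, of "real j * dt" "real (Suc j) * dt"] dt_pos by simp
    have gF: "(\<lambda>\<omega>. ln (c j \<omega>) + D) \<in> borel_measurable F"
    proof -
      have "c j \<in> measurable F borel" unfolding F_def by (rule measurable_vimage_algebra1) simp
      then show ?thesis by measurable
    qed
    have "AE \<omega> in M. real_cond_exp M F (\<lambda>\<omega>. ln (c (Suc j) \<omega>)) \<omega> = ln (c j \<omega>) + D"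
    proof (rule fs.real_cond_exp_charact[OF _ intf intg gF])
      fix A assume A: "A \<in> sets F"
      then obtain B where B: "B \<in> sets borel" "A = c j -` B \<inter> space M"
        unfolding F_def by (auto simp: sets_vimage_algebra2)
      have AM: "A \<in> sets M" using B cmeas by (simp add: measurable_sets)
      have z0: "(\<integral>\<omega>. indicator A \<omega> * (W (real (Suc j) * dt) \<omega> - W (real j * dt) \<omega>) \<partial>M) = 0"
      proof -
        have "(\<integral>\<omega>. indicator A \<omega> * (W (real (Suc j) * dt) \<omega> - W (real j * dt) \<omega>) \<partial>M)
          = (\<integral>\<omega>. (\<lambda>y. indicator B (hh y)) (W (real j * dt) \<omega> - W 0 \<omega>) * (W (real (Suc j) * dt) \<omega> - W (real j * dt) \<omega>) \<partial>M)"
          by (rule Bochner_Integration.integral_cong) (auto simp: B(2) cj indicator_def)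
        also have "\<dots> = 0"
          by (rule indep_incr_integral[OF BM, where B=1]) (use dt_pos B(1) in \<open>auto simp: hh_def indicator_def\<close>)
        finally show ?thesis .
      qed
      have "(\<integral>\<omega>\<in>A. ln (c (Suc j) \<omega>) \<partial>M)
          = (\<integral>\<omega>. indicator A \<omega> * (ln (c j \<omega>) + D) + k * (indicator A \<omega> * (W (real (Suc j) * dt) \<omega> - W (real j * dt) \<omega>)) \<partial>M)"
        unfolding set_lebesgue_integral_def fg by (simp add: algebra_simps)
      also have "\<dots> = (\<integral>\<omega>. indicator A \<omega> * (ln (c j \<omega>) + D) \<partial>M) + k * (\<integral>\<omega>. indicator A \<omega> * (W (real (Suc j) * dt) \<omega> - W (real j * dt) \<omega>) \<partial>M)"
        using integrable_mult_indicator[OF AM intg] integrable_mult_indicator[OF AM incr] by simp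
      also have "\<dots> = (\<integral>\<omega>\<in>A. ln (c j \<omega>) + D \<partial>M)"
        unfolding z0 set_lebesgue_integral_def by simp
      finally show "(\<integral>\<omega>\<in>A. ln (c (Suc j) \<omega>) \<partial>M) = (\<integral>\<omega>\<in>A. ln (c j \<omega>) + D \<partial>M)" .
    qed
    then show "AE \<omega> in M.
              real_cond_exp M (vimage_algebra (space M) (c j) borel) (\<lambda>\<omega>. ln (c (Suc j) \<omega>)) \<omega>
              = ln (c j \<omega>) + ln (s j powr (- C)) + \<rho> / (1 - \<rho>) * ln (\<phi> j) + \<xi>' * dt"
      unfolding F_def D_def by (simp only: add.assoc)
  qed
  show ?thesis using P1 P2 P3 by blast
qed

end
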